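(* Let $Q$ be a subfield of $\mathbb{R}$, let $R = Q \times Q$ with coordinatewise addition and multiplication $(a,b)\cdot(c,d) = (ac, ad + bc)$, and consider the Frobenius template $(A(Q), C(Q), U(Q))$ in $R$, where $A(Q) = (Q \cap (0,\infty)) \times (Q \cap [0,\infty))$ and $C(Q) = U(Q) = (Q \cap [0,\infty))^2$. Let $n$ be a positive integer and let $(\alpha_1, \dots, \alpha_n)$ be a list of elements $\alpha_i = (a_i, b_i) \in A(Q)$ with $b_1 = 0$. Then $\mathrm{Frob}(\alpha_1, \dots, \alpha_n) = MN(\alpha_1, \dots, \alpha_n) = U(Q)$.
   Context: For a list $(\alpha_1,\dots,\alpha_n)$ in $A(Q)$, $MN(\alpha_1, \dots, \alpha_n) = \{\sum_{i=1}^n \alpha_i \lambda_i : \lambda_1, \dots, \lambda_n \in C(Q)\}$ (product in $R$), and $\mathrm{Frob}(\alpha_1, \dots, \alpha_n) = \{w \in R : w + U(Q) \subseteq MN(\alpha_1, \dots, \alpha_n)\}$, where $w + U(Q) = \{w + u : u \in U(Q)\}$. *)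

theory Defs
  imports Main "HOL.Real"
begin

definition real_subfield :: "real set \<Rightarrow> bool" where
  "real_subfield Q \<longleftrightarrow> 0 \<in> Q \<and> 1 \<in> Q \<and>
     (\<forall>x\<in>Q. \<forall>y\<in>Q. x + y \<in> Q \<and> x * y \<in> Q) \<and>
     (\<forall>x\<in>Q. - x \<in> Q) \<and> (\<forall>x\<in>Q. x \<noteq> 0 \<longrightarrow> inverse x \<in> Q)"

definition Rset :: "real set \<Rightarrow> (real \<times> real) set" where
  "Rset Q = Q \<times> Q"

definition radd :: "real \<times> real \<Rightarrow> real \<times> real \<Rightarrow> real \<times> real" where
  "radd x y = (fst x + fst y, snd x + snd y)"

definition rmul :: "real \<times> real \<Rightarrow> real \<times> real \<Rightarrow> real \<times> real" where
  "rmul x y = (fst x * fst y, fst x * snd y + snd x * fst y)"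

definition Aset :: "real set \<Rightarrow> (real \<times> real) set" where
  "Aset Q = {x \<in> Q. 0 < x} \<times> {x \<in> Q. 0 \<le> x}"

definition Cset :: "real set \<Rightarrow> (real \<times> real) set" where
  "Cset Q = {x \<in> Q. 0 \<le> x} \<times> {x \<in> Q. 0 \<le> x}"

definition Uset :: "real set \<Rightarrow> (real \<times> real) set" where
  "Uset Q = {x \<in> Q. 0 \<le> x} \<times> {x \<in> Q. 0 \<le> x}"

text \<open>MN(alpha_1,...,alpha_n) = { sum_i alpha_i lambda_i : lambda_i in C(Q) },
  the list alpha_1..alpha_n being given as a Isabelle list (indices 0..n-1).\<close>
definition MN :: "real set \<Rightarrow> (real \<times> real) list \<Rightarrow> (real \<times> real) set" where
  "MN Q as = {foldr radd (map (\<lambda>i. rmul (as ! i) (lam i)) [0..<length as]) (0, 0) | lam.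
                 \<forall>i < length as. lam i \<in> Cset Q}"

definition Frob :: "real set \<Rightarrow> (real \<times> real) list \<Rightarrow> (real \<times> real) set" where
  "Frob Q as = {w \<in> Rset Q. (\<lambda>u. radd w u) ` Uset Q \<subseteq> MN Q as}"

end

theory Submission
  imports Defs
begin

lemma foldr_radd_sum:
  "foldr radd (map f xs) (0,0) = (\<Sum>x\<leftarrow>xs. fst (f x), \<Sum>x\<leftarrow>xs. snd (f x))"
  by (induct xs) (auto simp: radd_def)

lemma foldr_radd_upt:
  "foldr radd (map f [0..<n]) (0,0) = (\<Sum>i<n. fst (f i), \<Sum>i<n. snd (f i))"
  unfolding foldr_radd_sum interv_sum_list_conv_sum_set_nat
  by (simp add: atLeast0LessThan)

lemma sum_in_Q:
  assumes "real_subfield Q" "finite A" "\<forall>i\<in>A. g i \<in> Q"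
  shows "sum g A \<in> Q"
  using assms(2,3)
proof (induct A rule: finite_induct)
  case empty then show ?case using assms(1) by (simp add: real_subfield_def)
next
  case (insert x F) then show ?case using assms(1) by (simp add: real_subfield_def)
qed

lemma MN_sub_U:
  assumes Q: "real_subfield Q" and A: "set as \<subseteq> Aset Q"
  shows "MN Q as \<subseteq> Uset Q"
proof
  fix w assume "w \<in> MN Q as"
  then obtain lam where w: "w = foldr radd (map (\<lambda>i. rmul (as ! i) (lam i)) [0..<length as]) (0, 0)"
    and l: "\<forall>i < length as. lam i \<in> Cset Q" unfolding MN_def by blast
  have mQ: "\<forall>x\<in>Q. \<forall>y\<in>Q. x + y \<in> Q \<and> x * y \<in> Q" using Q by (simp add: real_subfield_def)
  have ai: "fst (as ! i) \<in> Q \<and> 0 < fst (as ! i) \<and> snd (as ! i) \<in> Q \<and> 0 \<le> snd (as ! i)"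
    if "i < length as" for i
    using A nth_mem[OF that] by (auto simp: Aset_def)
  have li: "fst (lam i) \<in> Q \<and> 0 \<le> fst (lam i) \<and> snd (lam i) \<in> Q \<and> 0 \<le> snd (lam i)"
    if "i < length as" for i
    using l that by (auto simp: Cset_def)
  have t1: "fst (rmul (as ! i) (lam i)) \<in> Q \<and> 0 \<le> fst (rmul (as ! i) (lam i))"
    if "i < length as" for i
    using ai[OF that] li[OF that] mQ by (simp add: rmul_def)
  have t2: "snd (rmul (as ! i) (lam i)) \<in> Q \<and> 0 \<le> snd (rmul (as ! i) (lam i))"
    if "i < length as" for i
    using ai[OF that] li[OF that] mQ by (simp add: rmul_def)
  show "w \<in> Uset Q"
  proof -
    have "(\<Sum>i<length as. fst (rmul (as ! i) (lam i))) \<in> Q"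
      by (rule sum_in_Q[OF Q]) (use t1 in auto)
    moreover have "(\<Sum>i<length as. snd (rmul (as ! i) (lam i))) \<in> Q"
      by (rule sum_in_Q[OF Q]) (use t2 in auto)
    ultimately show ?thesis unfolding w foldr_radd_upt Uset_def
      using t1 t2 by (auto intro!: sum_nonneg)
  qed
qed

lemma U_sub_MN:
  assumes Q: "real_subfield Q" and A: "set as \<subseteq> Aset Q" and n: "length as > 0"
    and b: "snd (as ! 0) = 0"
  shows "Uset Q \<subseteq> MN Q as"
proof
  fix w assume "w \<in> Uset Q"
  then obtain x y where w: "w = (x,y)" "x \<in> Q" "y \<in> Q" "0 \<le> x" "0 \<le> y"
    by (auto simp: Uset_def)
  obtain a where a: "fst (as ! 0) = a" "a \<in> Q" "0 < a"
    using A nth_mem[OF n] by (auto simp: Aset_def)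
  have ia: "inverse a \<in> Q" using Q a by (simp add: real_subfield_def)
  have xa: "x / a \<in> Q" "y / a \<in> Q" using Q ia w
    by (auto simp: real_subfield_def divide_inverse)
  define lam :: "nat \<Rightarrow> real \<times> real" where "lam i = (if i = 0 then (x / a, y / a) else (0::real, 0::real))" for i
  have lC: "\<forall>i < length as. lam i \<in> Cset Q"
    using xa w a Q by (auto simp: lam_def Cset_def real_subfield_def)
  have as0: "as ! 0 = (a, 0)" using a b by (metis prod.collapse)
  have "(\<Sum>i<length as. fst (rmul (as ! i) (lam i))) = (\<Sum>i<length as. if i = 0 then x else 0)"
    by (rule sum.cong) (use a as0 in \<open>auto simp: lam_def rmul_def\<close>)
  also have "\<dots> = x" using n by simp
  finally have s1: "(\<Sum>i<length as. fst (rmul (as ! i) (lam i))) = x" .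
  have "(\<Sum>i<length as. snd (rmul (as ! i) (lam i))) = (\<Sum>i<length as. if i = 0 then y else 0)"
    by (rule sum.cong) (use a as0 in \<open>auto simp: lam_def rmul_def\<close>)
  also have "\<dots> = y" using n by simp
  finally have s2: "(\<Sum>i<length as. snd (rmul (as ! i) (lam i))) = y" .
  have "w = foldr radd (map (\<lambda>i. rmul (as ! i) (lam i)) [0..<length as]) (0, 0)"
    unfolding foldr_radd_upt s1 s2 w by simp
  then show "w \<in> MN Q as" unfolding MN_def using lC by blast
qed

theorem proposition4p2:
  fixes Q :: "real set" and as :: "(real \<times> real) list" and n :: nat
  assumes "real_subfield Q"
    and "n > 0" and "length as = n"
    and "set as \<subseteq> Aset Q"
    and "snd (as ! 0) = 0"
  shows "Frob Q as = MN Q as \<and> MN Q as = Uset Q"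
proof -
  have MU: "MN Q as = Uset Q"
    using MN_sub_U[OF assms(1,4)] U_sub_MN[OF assms(1,4)] assms(2,3,5) by auto
  have Q: "0 \<in> Q" "\<forall>x\<in>Q. \<forall>y\<in>Q. x + y \<in> Q" using assms(1) by (auto simp: real_subfield_def)
  have "Frob Q as = Uset Q"
  proof
    show "Frob Q as \<subseteq> Uset Q"
    proof
      fix w assume "w \<in> Frob Q as"
      then have "radd w (0,0) \<in> Uset Q" unfolding Frob_def MU using Q by (auto simp: Uset_def)
      then show "w \<in> Uset Q" by (simp add: radd_def)
    qed
    show "Uset Q \<subseteq> Frob Q as"
      unfolding Frob_def MU using Q by (auto simp: Uset_def Rset_def radd_def)
  qed
  then show ?thesis using MU by simp
qed

end
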